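(* Let $\rho_{AB}$ be a state on $A\otimes B$ with $A$ a qubit ($\dim A=2$) and $B$ finite-dimensional. Then $$Q^A_{\mathcal N}(\rho_{AB})=\min_{\{|a_0\rangle,|a_1\rangle\}}\frac12\big\|\rho_{AB}-\Pi_{\{|a_k\rangle\}}[\rho_{AB}]\big\|_1,$$ where the minimum is over orthonormal bases $\{|a_0\rangle,|a_1\rangle\}$ of $A$ and $\Pi_{\{|a_k\rangle\}}[X]=\sum_{k=0}^1(|a_k\rangle\langle a_k|\otimes\mathbb I_B)X(|a_k\rangle\langle a_k|\otimes\mathbb I_B)$ is the complete projective measurement (dephasing) on $A$ in that basis.
   Context: $\|\cdot\|_1$ is the trace norm. The negativity of a bipartite state $\tau_{X:Y}$ is $\mathcal N_{X:Y}(\tau)=(\|\tau^\Gamma\|_1-1)/2$ with $\tau^\Gamma$ the partial transpose on one party. For $A$ of dimension $m$ and an orthonormal basis $\{|a_k\rangle\}$ of $A$, the measurement interaction is the isometry $V:A\to A\otimes A'$ ($A'$ $m$-dimensional with computational basis $\{|k\rangle\}$), $V|a_k\rangle=|a_k\rangle|k\rangle$. The one-sided negativity of quantumness is $Q^A_{\mathcal N}(\rho_{AB})=\min\mathcal N_{AB:A'}\big((V\otimes\mathbb I_B)\rho_{AB}(V\otimes\mathbb I_B)^\dagger\big)$ over all orthonormal bases of $A$. *)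

theory Defs
  imports "Jordan_Normal_Form.Schur_Decomposition" "Jordan_Normal_Form.Char_Poly"
begin

(* Finite-dimensional operators are complex matrices (JNF type complex mat).
   Composite systems use the Kronecker convention: in X \<otimes> Y the index (x,y)
   is stored at x * dim Y + y. *)

definition kron :: "complex mat \<Rightarrow> complex mat \<Rightarrow> complex mat" where
  "kron A B = mat (dim_row A * dim_row B) (dim_col A * dim_col B)
     (\<lambda>(i,j). A $$ (i div dim_row B, j div dim_col B) * B $$ (i mod dim_row B, j mod dim_col B))"

(* trace norm = sum of singular values = sum of square roots of the eigenvalues
   (with algebraic multiplicity) of X^dagger X *)
definition trace_norm :: "complex mat \<Rightarrow> real" where
  "trace_norm X = (let es = (SOME es. char_poly (mat_adjoint X * X) = (\<Prod>e\<leftarrow>es. [:- e, 1:]))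
                   in (\<Sum>e\<leftarrow>es. sqrt (Re e)))"

definition psd :: "complex mat \<Rightarrow> bool" where
  "psd M \<longleftrightarrow> mat_adjoint M = M \<and>
     (\<forall>v. dim_vec v = dim_col M \<longrightarrow>
        Im (conjugate v \<bullet> (M *\<^sub>v v)) = 0 \<and> Re (conjugate v \<bullet> (M *\<^sub>v v)) \<ge> 0)"

definition mtrace :: "complex mat \<Rightarrow> complex" where
  "mtrace M = (\<Sum>i<dim_row M. M $$ (i,i))"

definition density :: "nat \<Rightarrow> complex mat \<Rightarrow> bool" where
  "density d \<rho> \<longleftrightarrow> \<rho> \<in> carrier_mat d d \<and> psd \<rho> \<and> mtrace \<rho> = 1"

(* orthonormal bases {|a_0>,|a_1>} of the qubit A = columns of a 2x2 unitary *)
definition unitary2 :: "complex mat \<Rightarrow> bool" where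
  "unitary2 U \<longleftrightarrow> U \<in> carrier_mat 2 2 \<and> mat_adjoint U * U = 1\<^sub>m 2"

definition proj :: "complex vec \<Rightarrow> complex mat" where
  "proj a = mat (dim_vec a) (dim_vec a) (\<lambda>(i,j). a $ i * cnj (a $ j))"

definition ket :: "nat \<Rightarrow> nat \<Rightarrow> complex mat" where
  "ket m k = mat m 1 (\<lambda>(i,j). if i = k then 1 else 0)"

(* (V \<otimes> I_B) : A \<otimes> B \<rightarrow> (A \<otimes> B) \<otimes> A',  |a_k>|b> \<mapsto> |a_k>|b>|k>,
   with V|a_k> = |a_k>|k>, written as  \<Sum>_k (|a_k><a_k| \<otimes> I_B) \<otimes> |k>  *)
definition meas_iso :: "complex mat \<Rightarrow> nat \<Rightarrow> complex mat" where
  "meas_iso U n = kron (kron (proj (col U 0)) (1\<^sub>m n)) (ket 2 0)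
                + kron (kron (proj (col U 1)) (1\<^sub>m n)) (ket 2 1)"

definition partial_transpose2 :: "nat \<Rightarrow> nat \<Rightarrow> complex mat \<Rightarrow> complex mat" where
  "partial_transpose2 d1 d2 M = mat (d1 * d2) (d1 * d2)
     (\<lambda>(i,j). M $$ ((i div d2) * d2 + j mod d2, (j div d2) * d2 + i mod d2))"

definition negativity :: "nat \<Rightarrow> nat \<Rightarrow> complex mat \<Rightarrow> real" where
  "negativity d1 d2 \<tau> = (trace_norm (partial_transpose2 d1 d2 \<tau>) - 1) / 2"

(* one-sided negativity of quantumness, A a qubit, dim B = n *)
definition Q_neg :: "nat \<Rightarrow> complex mat \<Rightarrow> real" where
  "Q_neg n \<rho> = Inf {negativity (2 * n) 2 (meas_iso U n * \<rho> * mat_adjoint (meas_iso U n)) | U. unitary2 U}"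

definition dephase :: "complex mat \<Rightarrow> nat \<Rightarrow> complex mat \<Rightarrow> complex mat" where
  "dephase U n X =
     kron (proj (col U 0)) (1\<^sub>m n) * X * kron (proj (col U 0)) (1\<^sub>m n)
   + kron (proj (col U 1)) (1\<^sub>m n) * X * kron (proj (col U 1)) (1\<^sub>m n)"

end

theory Submission
  imports Defs
begin

lemma adj_eq: "mat_adjoint (A::complex mat) = mat (dim_col A) (dim_row A) (\<lambda>(i,j). cnj (A $$ (j,i)))"
  by (rule eq_matI) (auto simp: mat_adjoint_def mat_of_rows_def)

lemma adj_index[simp]: "i < dim_col A \<Longrightarrow> j < dim_row A \<Longrightarrow> mat_adjoint (A::complex mat) $$ (i,j) = cnj (A $$ (j,i))"
  unfolding adj_eq by simp

lemma adj_dim[simp]: "dim_row (mat_adjoint (A::complex mat)) = dim_col A" "dim_col (mat_adjoint (A::complex mat)) = dim_row A"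
  unfolding adj_eq by simp_all

lemma adj_carrier[simp]: "(A::complex mat) \<in> carrier_mat r c \<Longrightarrow> mat_adjoint A \<in> carrier_mat c r"
  unfolding carrier_mat_def by simp

lemma adj_adj[simp]: "mat_adjoint (mat_adjoint A) = (A::complex mat)"
  by (rule eq_matI) auto

lemma adj_one[simp]: "mat_adjoint (1\<^sub>m k) = (1\<^sub>m k :: complex mat)"
  by (rule eq_matI) auto

lemma adj_mult: assumes "(A::complex mat) \<in> carrier_mat r k" "B \<in> carrier_mat k c"
  shows "mat_adjoint (A * B) = mat_adjoint B * mat_adjoint A"
proof (rule eq_matI)
  have d: "dim_row A = r" "dim_col A = k" "dim_row B = k" "dim_col B = c" using assms by auto
  fix i j assume "i < dim_row (mat_adjoint B * mat_adjoint A)" "j < dim_col (mat_adjoint B * mat_adjoint A)"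
  then have i: "i < c" and j: "j < r" using d by simp_all
  show "mat_adjoint (A*B) $$ (i,j) = (mat_adjoint B * mat_adjoint A) $$ (i,j)"
    using d i j by (simp add: scalar_prod_def cnj_sum mult.commute)
qed (use assms in simp_all)

lemma adj_add: assumes "(A::complex mat) \<in> carrier_mat r c" "B \<in> carrier_mat r c"
  shows "mat_adjoint (A + B) = mat_adjoint A + mat_adjoint B"
proof (rule eq_matI)
  have d: "dim_row A = r" "dim_col A = c" "dim_row B = r" "dim_col B = c" using assms by auto
  fix i j assume "i < dim_row (mat_adjoint A + mat_adjoint B)" "j < dim_col (mat_adjoint A + mat_adjoint B)"
  then have i: "i < c" and j: "j < r" using d by simp_all
  show "mat_adjoint (A + B) $$ (i,j) = (mat_adjoint A + mat_adjoint B) $$ (i,j)"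
    using d i j by simp
qed (use assms in simp_all)

lemma sum_split_prod: "(\<Sum>t<a*b. f t) = (\<Sum>p<a. \<Sum>q<b. f (p*b+q :: nat))"
proof -
  have inj: "inj_on (\<lambda>(p,q). p*b+q) ({..<a} \<times> {..<b})"
  proof (rule inj_onI, clarsimp)
    fix p q p' q' assume "p < a" "q < b" "p' < a" "q' < b" "p*b+q = p'*b+q'"
    then show "p = p' \<and> q = q'"
      by (metis add.commute add_right_cancel div_mult_self3 div_less less_zeroE mod_mult_self2 mod_less not_gr_zero)
  qed
  have img: "(\<lambda>(p,q). p*b+q) ` ({..<a} \<times> {..<b}) = {..<a*b}"
  proof
    show "(\<lambda>(p,q). p*b+q) ` ({..<a} \<times> {..<b}) \<subseteq> {..<a*b}"
    proof clarsimp
      fix p q assume "p < a" "q < b"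
      then have "p*b + q < p*b + b" by simp
      also have "\<dots> = (p+1)*b" by simp
      also have "\<dots> \<le> a*b" using \<open>p<a\<close> by (intro mult_right_mono) auto
      finally show "p*b+q < a*b" .
    qed
    show "{..<a*b} \<subseteq> (\<lambda>(p,q). p*b+q) ` ({..<a} \<times> {..<b})"
    proof
      fix t assume t: "t \<in> {..<a*b}"
      then have b: "b > 0" by (cases b) auto
      have "t = (t div b)*b + t mod b" by simp
      moreover have "t div b < a" using t b by (simp add: div_less_iff_less_mult)
      moreover have "t mod b < b" using b by simp
      ultimately show "t \<in> (\<lambda>(p,q). p*b+q) ` ({..<a} \<times> {..<b})"
        by (intro image_eqI[of _ _ "(t div b, t mod b)"]) auto
    qed
  qed
  have "(\<Sum>t<a*b. f t) = (\<Sum>x\<in>{..<a} \<times> {..<b}. f ((\<lambda>(p,q). p*b+q) x))"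
    by (subst img[symmetric], subst sum.reindex[OF inj]) simp
  also have "\<dots> = (\<Sum>p<a. \<Sum>q<b. f (p*b+q))"
    unfolding sum.cartesian_product by (simp add: case_prod_beta)
  finally show ?thesis .
qed

lemma kron_index[simp]: "i < dim_row A * dim_row B \<Longrightarrow> j < dim_col A * dim_col B \<Longrightarrow>
  kron A B $$ (i,j) = A $$ (i div dim_row B, j div dim_col B) * B $$ (i mod dim_row B, j mod dim_col B)"
  and kron_dim[simp]: "dim_row (kron A B) = dim_row A * dim_row B" "dim_col (kron A B) = dim_col A * dim_col B"
  unfolding kron_def by simp_all

lemma kron_carrier[simp]: "A \<in> carrier_mat r1 c1 \<Longrightarrow> B \<in> carrier_mat r2 c2 \<Longrightarrow> kron A B \<in> carrier_mat (r1*r2) (c1*c2)"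
  unfolding carrier_mat_def by simp

lemma div_lt: "i < a * b \<Longrightarrow> i div b < (a::nat)"
  by (metis div_less_iff_less_mult mult.commute mult_zero_right not_less_zero not_gr_zero)

lemma kron_mult: assumes A: "A \<in> carrier_mat r1 c1" and B: "B \<in> carrier_mat r2 c2"
  and C: "C \<in> carrier_mat c1 k1" and D: "D \<in> carrier_mat c2 k2"
  shows "kron A B * kron C D = kron (A * C) (B * D)"
proof (rule eq_matI)
  fix i j assume i: "i < dim_row (kron (A * C) (B * D))" and j: "j < dim_col (kron (A * C) (B * D))"
  then have i': "i < r1 * r2" and j': "j < k1 * k2" using A B C D by auto
  have r2: "r2 > 0" and k2: "k2 > 0" using i' j' by (auto intro: gr0I)
  have "(kron A B * kron C D) $$ (i,j) = (\<Sum>t<c1*c2. kron A B $$ (i,t) * kron C D $$ (t,j))"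
    using A B C D i' j' by (simp add: scalar_prod_def lessThan_atLeast0)
  also have "\<dots> = (\<Sum>p<c1. \<Sum>q<c2. kron A B $$ (i,p*c2+q) * kron C D $$ (p*c2+q,j))"
    by (rule sum_split_prod)
  also have "\<dots> = (\<Sum>p<c1. \<Sum>q<c2. (A $$ (i div r2, p) * C $$ (p, j div k2)) * (B $$ (i mod r2, q) * D $$ (q, j mod k2)))"
  proof (intro sum.cong refl)
    fix p q assume p: "p \<in> {..<c1}" and q: "q \<in> {..<c2}"
    have lt: "p*c2+q < c1*c2"
    proof -
      have "p*c2 + q < p*c2 + c2" using q by simp
      also have "\<dots> = (p+1)*c2" by simp
      also have "\<dots> \<le> c1*c2" using p by (intro mult_right_mono) auto
      finally show ?thesis .
    qed
    have d: "(p*c2+q) div c2 = p" "(p*c2+q) mod c2 = q" using q by auto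
    show "kron A B $$ (i,p*c2+q) * kron C D $$ (p*c2+q,j) = (A $$ (i div r2, p) * C $$ (p, j div k2)) * (B $$ (i mod r2, q) * D $$ (q, j mod k2))"
      using A B C D i' j' lt d by simp
  qed
  also have "\<dots> = (\<Sum>p<c1. A $$ (i div r2, p) * C $$ (p, j div k2)) * (\<Sum>q<c2. B $$ (i mod r2, q) * D $$ (q, j mod k2))"
    by (simp only: sum_product)
  also have "\<dots> = kron (A * C) (B * D) $$ (i,j)"
    using A B C D i' j' r2 k2 by (simp add: scalar_prod_def lessThan_atLeast0 div_lt)
  finally show "(kron A B * kron C D) $$ (i,j) = kron (A * C) (B * D) $$ (i,j)" .
qed (use A B C D in auto)

lemma kron_adj: "mat_adjoint (kron A B :: complex mat) = kron (mat_adjoint A) (mat_adjoint B)"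
proof (rule eq_matI)
  fix i j assume "i < dim_row (kron (mat_adjoint A) (mat_adjoint B))" "j < dim_col (kron (mat_adjoint A) (mat_adjoint B))"
  then have i: "i < dim_col A * dim_col B" and j: "j < dim_row A * dim_row B" by auto
  then have "dim_col B > 0" "dim_row B > 0" by (auto intro: gr0I)
  then show "mat_adjoint (kron A B) $$ (i, j) = kron (mat_adjoint A) (mat_adjoint B) $$ (i, j)"
    using i j by (simp add: div_lt)
qed auto

lemma kron_one: "kron (1\<^sub>m a) (1\<^sub>m b) = 1\<^sub>m (a*b)"
proof (rule eq_matI)
  fix i j assume "i < dim_row (1\<^sub>m (a*b))" "j < dim_col (1\<^sub>m (a*b))"
  then have i: "i < a*b" and j: "j < a*b" by auto
  then have b: "b > 0" by (auto intro: gr0I)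
  have "(i div b = j div b \<and> i mod b = j mod b) = (i = j)"
    by (metis div_mult_mod_eq)
  then show "kron (1\<^sub>m a) (1\<^sub>m b) $$ (i, j) = 1\<^sub>m (a*b) $$ (i, j)"
    using i j b by (auto simp: div_lt)
qed auto

lemma kron_one1: "kron X (1\<^sub>m 1) = X"
  by (rule eq_matI) auto

lemma kron_add: assumes "A \<in> carrier_mat r c" "B \<in> carrier_mat r c"
  shows "kron (A + B) C = kron A C + kron B C"
  using assms by (intro eq_matI) (auto simp: div_lt algebra_simps)

lemma lin_prod_mset:
  "(\<Prod>e\<leftarrow>es. [:- e, 1:]) = (\<Prod>e\<leftarrow>fs. [:- e, 1:] :: complex poly) \<Longrightarrow> mset es = mset fs"
proof (induct es arbitrary: fs)
  case Nil
  then have "degree (\<Prod>e\<leftarrow>fs. [:- e, 1:] :: complex poly) = 0" by simp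
  then have "length fs = 0" using degree_linear_factors[of uminus fs] by simp
  then show ?case by simp
next
  case (Cons e es)
  have "poly (\<Prod>e\<leftarrow>fs. [:- e, 1:]) e = 0"
    unfolding Cons(2)[symmetric] list.map prod_list.Cons poly_mult by simp
  then have ef: "e \<in> set fs" by (auto simp: poly_prod_list prod_list_zero_iff)
  have pm: "\<And>xs. prod_mset (image_mset (\<lambda>e. [:- e, 1:]) (mset xs)) = (\<Prod>e\<leftarrow>xs. [:- e, 1:] :: complex poly)"
    by (metis mset_map prod_mset_prod_list)
  have "(\<Prod>e\<leftarrow>fs. [:- e, 1:]) = prod_mset (image_mset (\<lambda>e. [:- e, 1:]) (mset fs))"
    by (rule pm[symmetric])
  also have "mset fs = add_mset e (mset (remove1 e fs))" using ef by simp
  also have "prod_mset (image_mset (\<lambda>e. [:- e, 1:]) (add_mset e (mset (remove1 e fs)))) = [:- e, 1:] * (\<Prod>e\<leftarrow>remove1 e fs. [:- e, 1:])"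
    by (simp add: pm[symmetric])
  finally have "[:- e, 1:] * (\<Prod>e\<leftarrow>es. [:- e, 1:]) = [:- e, 1:] * (\<Prod>e\<leftarrow>remove1 e fs. [:- e, 1:] :: complex poly)"
    using Cons(2) by simp
  then have "(\<Prod>e\<leftarrow>es. [:- e, 1:]) = (\<Prod>e\<leftarrow>remove1 e fs. [:- e, 1:] :: complex poly)"
    by (rule mult_left_cancel[THEN iffD1, rotated]) simp
  from Cons(1)[OF this] have "mset es = mset (remove1 e fs)" .
  then show ?case using ef by simp
qed

lemma tn_char: assumes "char_poly (mat_adjoint X * X) = (\<Prod>e\<leftarrow>es. [:- e, 1:])"
  shows "trace_norm X = (\<Sum>e\<leftarrow>es. sqrt (Re e))"
proof -
  let ?P = "\<lambda>es. char_poly (mat_adjoint X * X) = (\<Prod>e\<leftarrow>es. [:- e, 1:])"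
  have "?P (SOME es. ?P es)" using someI[of ?P es] assms by blast
  from this assms have "(\<Prod>e\<leftarrow>(SOME es. ?P es). [:- e, 1:]) = (\<Prod>e\<leftarrow>es. [:- e, 1:])"
    by (rule trans[OF sym])
  then have m: "mset (SOME es. ?P es) = mset es" by (rule lin_prod_mset)
  have sm: "\<And>xs. (\<Sum>e\<leftarrow>xs. sqrt (Re e)) = sum_mset (image_mset (\<lambda>e. sqrt (Re e)) (mset xs))"
    by (metis mset_map sum_mset_sum_list)
  have "(\<Sum>e\<leftarrow>(SOME es. ?P es). sqrt (Re e)) = (\<Sum>e\<leftarrow>es. sqrt (Re e))"
    unfolding sm m ..
  then show ?thesis unfolding trace_norm_def Let_def by simp
qed

lemma tn_cp: "char_poly (mat_adjoint X * X) = char_poly (mat_adjoint Y * Y) \<Longrightarrow> trace_norm X = trace_norm Y"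
  unfolding trace_norm_def by simp

lemma mult_sq[simp]: "(A::complex mat) \<in> carrier_mat k k \<Longrightarrow> B \<in> carrier_mat k k \<Longrightarrow> A * B \<in> carrier_mat k k"
  by (rule mult_carrier_mat)

lemma cancel_l: assumes "(A::complex mat) \<in> carrier_mat k k" "B \<in> carrier_mat k k" "Y \<in> carrier_mat k c" "A * B = 1\<^sub>m k"
  shows "A * (B * Y) = Y"
proof -
  have "A * (B * Y) = (A * B) * Y" by (rule assoc_mult_mat[symmetric, OF assms(1-3)])
  then show ?thesis using assms(4) left_mult_one_mat[OF assms(3)] by simp
qed

lemma adj_conj: assumes V: "V \<in> carrier_mat k k" and X: "(X::complex mat) \<in> carrier_mat k k"
  shows "mat_adjoint (V * X * mat_adjoint V) = V * mat_adjoint X * mat_adjoint V"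
proof -
  have Va: "mat_adjoint V \<in> carrier_mat k k" using V by simp
  have Xa: "mat_adjoint X \<in> carrier_mat k k" using X by simp
  have VX: "V * X \<in> carrier_mat k k" using V X by simp
  have "mat_adjoint (V * X * mat_adjoint V) = mat_adjoint (mat_adjoint V) * mat_adjoint (V * X)"
    by (rule adj_mult[OF VX Va])
  also have "\<dots> = V * (mat_adjoint X * mat_adjoint V)" using adj_mult[OF V X] by simp
  also have "\<dots> = V * mat_adjoint X * mat_adjoint V" by (rule assoc_mult_mat[symmetric, OF V Xa Va])
  finally show ?thesis .
qed

lemma uconj_mult: assumes V: "(V::complex mat) \<in> carrier_mat k k" and A: "A \<in> carrier_mat k k" and B: "B \<in> carrier_mat k k"
  and VV: "mat_adjoint V * V = 1\<^sub>m k"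
  shows "(V * A * mat_adjoint V) * (V * B * mat_adjoint V) = V * (A * B) * mat_adjoint V"
proof -
  have Va: "mat_adjoint V \<in> carrier_mat k k" using V by simp
  have c: "mat_adjoint V * (V * (B * mat_adjoint V)) = B * mat_adjoint V"
    by (rule cancel_l[OF Va V _ VV, of _ k]) (use B Va in simp)
  show ?thesis using V A B Va c by (simp add: assoc_mult_mat[of _ k k _ k _ k])
qed

definition unitary :: "nat \<Rightarrow> complex mat \<Rightarrow> bool" where
  "unitary k V \<longleftrightarrow> V \<in> carrier_mat k k \<and> mat_adjoint V * V = 1\<^sub>m k \<and> V * mat_adjoint V = 1\<^sub>m k"

lemma tn_unitary: assumes u: "unitary k V" and X: "X \<in> carrier_mat k k"
  shows "trace_norm (V * X * mat_adjoint V) = trace_norm X"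
proof (rule tn_cp)
  have V: "V \<in> carrier_mat k k" and VV: "mat_adjoint V * V = 1\<^sub>m k" "V * mat_adjoint V = 1\<^sub>m k"
    using u by (auto simp: unitary_def)
  have Va: "mat_adjoint V \<in> carrier_mat k k" using V by simp
  have Xa: "mat_adjoint X \<in> carrier_mat k k" using X by simp
  have "mat_adjoint (V * X * mat_adjoint V) * (V * X * mat_adjoint V)
     = V * (mat_adjoint X * X) * mat_adjoint V"
    unfolding adj_conj[OF V X] by (rule uconj_mult[OF V Xa X VV(1)])
  moreover have "similar_mat (V * (mat_adjoint X * X) * mat_adjoint V) (mat_adjoint X * X)"
    by (rule similar_matI[of _ _ _ _ k]) (use V Va X Xa VV in simp_all)
  ultimately show "char_poly (mat_adjoint (V * X * mat_adjoint V) * (V * X * mat_adjoint V)) =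
    char_poly (mat_adjoint X * X)" using char_poly_similar by simp
qed

lemma adj_four_block: assumes "(A::complex mat) \<in> carrier_mat a a" "B \<in> carrier_mat b b"
  shows "mat_adjoint (four_block_mat A (0\<^sub>m a b) (0\<^sub>m b a) B) = four_block_mat (mat_adjoint A) (0\<^sub>m a b) (0\<^sub>m b a) (mat_adjoint B)"
proof -
  have d: "dim_row A = a" "dim_col A = a" "dim_row B = b" "dim_col B = b" using assms by auto
  show ?thesis by (rule eq_matI) (simp_all add: d)
qed

lemma tn_block: assumes A: "A \<in> carrier_mat a a" and B: "B \<in> carrier_mat b b"
  shows "trace_norm (four_block_mat A (0\<^sub>m a b) (0\<^sub>m b a) B) = trace_norm A + trace_norm B"
proof -
  let ?M = "four_block_mat A (0\<^sub>m a b) (0\<^sub>m b a) B"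
  have AA: "mat_adjoint A * A \<in> carrier_mat a a" and BB: "mat_adjoint B * B \<in> carrier_mat b b"
    using A B by auto
  have "mat_adjoint ?M * ?M = four_block_mat (mat_adjoint A * A) (0\<^sub>m a b) (0\<^sub>m b a) (mat_adjoint B * B)"
    unfolding adj_four_block[OF A B]
    by (subst mult_four_block_mat[OF adj_carrier[OF A] _ _ adj_carrier[OF B] A _ _ B]) (use A B in simp_all)
  moreover obtain es where es: "char_poly (mat_adjoint A * A) = (\<Prod>e\<leftarrow>es. [:- e, 1:])"
    using char_poly_factorized[OF AA] by blast
  moreover obtain fs where fs: "char_poly (mat_adjoint B * B) = (\<Prod>e\<leftarrow>fs. [:- e, 1:])"
    using char_poly_factorized[OF BB] by blast
  ultimately have "char_poly (mat_adjoint ?M * ?M) = (\<Prod>e\<leftarrow>es @ fs. [:- e, 1:])"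
    using char_poly_0_block[OF refl _ _ AA _ BB] by fastforce
  then have "trace_norm ?M = (\<Sum>e\<leftarrow>es @ fs. sqrt (Re e))" by (rule tn_char)
  also have "\<dots> = trace_norm A + trace_norm B" using tn_char[OF es] tn_char[OF fs] by simp
  finally show ?thesis .
qed

lemma mtrace_comm: assumes "A \<in> carrier_mat r c" "B \<in> carrier_mat c r"
  shows "mtrace (A * B) = mtrace (B * A)"
  using assms unfolding mtrace_def
  by (simp add: scalar_prod_def lessThan_atLeast0[symmetric] sum.swap[of _ "{..<c}"] mult.commute)

lemma sprod_adj: assumes A: "(A::complex mat) \<in> carrier_mat m k" and v: "v \<in> carrier_vec k" and w: "w \<in> carrier_vec m"
  shows "conjugate v \<bullet> (mat_adjoint A *\<^sub>v w) = conjugate (A *\<^sub>v v) \<bullet> w"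
proof -
  have d: "dim_row A = m" "dim_col A = k" "dim_vec v = k" "dim_vec w = m" using A v w by auto
  have "conjugate v \<bullet> (mat_adjoint A *\<^sub>v w) = (\<Sum>i<k. cnj (v $ i) * (\<Sum>j<m. cnj (A $$ (j,i)) * w $ j))"
    by (simp add: d scalar_prod_def lessThan_atLeast0 row_def)
  also have "\<dots> = (\<Sum>j<m. (\<Sum>i<k. cnj (A $$ (j,i)) * cnj (v $ i)) * w $ j)"
    by (simp add: sum_distrib_left sum_distrib_right sum.swap[of _ "{..<k}"] mult_ac)
  also have "\<dots> = conjugate (A *\<^sub>v v) \<bullet> w"
    by (simp add: d scalar_prod_def lessThan_atLeast0 row_def cnj_sum)
  finally show ?thesis .
qed

lemma psd_herm: "psd M \<Longrightarrow> mat_adjoint M = M" by (simp add: psd_def)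

lemma psd_congr: assumes X: "X \<in> carrier_mat m m" and p: "psd X" and A: "A \<in> carrier_mat m k"
  shows "psd (mat_adjoint A * X * A)"
proof -
  have h: "mat_adjoint X = X" using p by (rule psd_herm)
  have Aa: "mat_adjoint A \<in> carrier_mat k m" using A by simp
  have AX: "mat_adjoint A * X \<in> carrier_mat k m" using Aa X by simp
  have "mat_adjoint (mat_adjoint A * X * A) = mat_adjoint A * mat_adjoint (mat_adjoint A * X)"
    by (rule adj_mult[OF AX A])
  also have "\<dots> = mat_adjoint A * (X * A)" unfolding adj_mult[OF Aa X] h adj_adj ..
  also have "\<dots> = mat_adjoint A * X * A" by (rule assoc_mult_mat[symmetric, OF Aa X A])
  finally have herm: "mat_adjoint (mat_adjoint A * X * A) = mat_adjoint A * X * A" .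
  have quad: "Im (conjugate v \<bullet> ((mat_adjoint A * X * A) *\<^sub>v v)) = 0 \<and> Re (conjugate v \<bullet> ((mat_adjoint A * X * A) *\<^sub>v v)) \<ge> 0"
    if dv: "dim_vec v = dim_col (mat_adjoint A * X * A)" for v
  proof -
    have dk: "dim_col (mat_adjoint A * X * A) = k" using carrier_matD[OF A] by simp
    have v: "v \<in> carrier_vec k" by (rule carrier_vecI) (simp only: dv dk)
    have Av: "A *\<^sub>v v \<in> carrier_vec m" using A v by simp
    have e1: "(mat_adjoint A * X * A) *\<^sub>v v = mat_adjoint A *\<^sub>v (X *\<^sub>v (A *\<^sub>v v))"
      unfolding assoc_mult_mat_vec[OF AX A v] assoc_mult_mat_vec[OF Aa X Av] ..
    have XAv: "X *\<^sub>v (A *\<^sub>v v) \<in> carrier_vec m" using X Av by simp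
    have e2: "conjugate v \<bullet> ((mat_adjoint A * X * A) *\<^sub>v v) = conjugate (A *\<^sub>v v) \<bullet> (X *\<^sub>v (A *\<^sub>v v))"
      unfolding e1 by (rule sprod_adj[OF A v XAv])
    have dX: "dim_vec (A *\<^sub>v v) = dim_col X" using carrier_matD[OF A] carrier_matD[OF X] by simp
    have "Im (conjugate (A *\<^sub>v v) \<bullet> (X *\<^sub>v (A *\<^sub>v v))) = 0 \<and> Re (conjugate (A *\<^sub>v v) \<bullet> (X *\<^sub>v (A *\<^sub>v v))) \<ge> 0"
      using p dX unfolding psd_def by blast
    then show ?thesis unfolding e2 .
  qed
  show ?thesis unfolding psd_def using herm quad by blast
qed

lemma psd_add: assumes X: "X \<in> carrier_mat m m" and Y: "Y \<in> carrier_mat m m" and p: "psd X" "psd Y"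
  shows "psd (X + Y)"
proof -
  have "mat_adjoint (X + Y) = X + Y" using adj_add[OF X Y] p by (simp add: psd_herm)
  moreover have "Im (conjugate v \<bullet> ((X + Y) *\<^sub>v v)) = 0 \<and> Re (conjugate v \<bullet> ((X + Y) *\<^sub>v v)) \<ge> 0"
    if dv: "dim_vec v = dim_col (X + Y)" for v
  proof -
    have dm: "dim_col (X + Y) = m" using carrier_matD[OF Y] by simp
    have v: "v \<in> carrier_vec m" by (rule carrier_vecI) (simp only: dv dm)
    have cv: "conjugate v \<in> carrier_vec m" using v by simp
    have Xv: "X *\<^sub>v v \<in> carrier_vec m" and Yv: "Y *\<^sub>v v \<in> carrier_vec m" using X Y v by auto
    have e: "conjugate v \<bullet> ((X + Y) *\<^sub>v v) = conjugate v \<bullet> (X *\<^sub>v v) + conjugate v \<bullet> (Y *\<^sub>v v)"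
      unfolding add_mult_distrib_mat_vec[OF X Y v] by (rule scalar_prod_add_distrib[OF cv Xv Yv])
    have "dim_vec v = dim_col X" "dim_vec v = dim_col Y" using carrier_vecD[OF v] carrier_matD[OF X] carrier_matD[OF Y] by simp_all
    then have "Im (conjugate v \<bullet> (X *\<^sub>v v)) = 0 \<and> Re (conjugate v \<bullet> (X *\<^sub>v v)) \<ge> 0"
       "Im (conjugate v \<bullet> (Y *\<^sub>v v)) = 0 \<and> Re (conjugate v \<bullet> (Y *\<^sub>v v)) \<ge> 0"
      using p unfolding psd_def by blast+
    then show ?thesis unfolding e by simp
  qed
  ultimately show ?thesis unfolding psd_def by blast
qed

lemma ut_sq: assumes B: "B \<in> carrier_mat m m" and ut: "upper_triangular B"
  shows "upper_triangular (B * B)" "diag_mat (B * B) = map (\<lambda>e. e * e) (diag_mat B)"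
proof -
  have d: "dim_row B = m" "dim_col B = m" using B by auto
  have z: "B $$ (i,j) = 0" if "i < m" "j < i" for i j using ut that d unfolding upper_triangular_def by simp
  show "upper_triangular (B * B)"
    unfolding upper_triangular_def
  proof (intro allI impI)
    fix i j assume i: "i < dim_row (B * B)" and j: "j < i"
    have "(B * B) $$ (i,j) = (\<Sum>k\<in>{0..<m}. B $$ (i,k) * B $$ (k,j))"
      using i j d by (simp add: scalar_prod_def)
    also have "\<dots> = 0"
    proof (rule sum.neutral, intro ballI)
      fix k assume k: "k \<in> {0..<m}"
      show "B $$ (i,k) * B $$ (k,j) = 0"
      proof (cases "k < i")
        case True then show ?thesis using z[of i k] i d by simp
      next
        case False then show ?thesis using z[of k j] j k by simp
      qed
    qed
    finally show "(B * B) $$ (i,j) = 0" .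
  qed
  have diag: "(B * B) $$ (i,i) = B $$ (i,i) * B $$ (i,i)" if i: "i < m" for i
  proof -
    have "(B * B) $$ (i,i) = (\<Sum>k\<in>{0..<m}. B $$ (i,k) * B $$ (k,i))"
      using i d by (simp add: scalar_prod_def)
    also have "\<dots> = B $$ (i,i) * B $$ (i,i) + (\<Sum>k\<in>{0..<m} - {i}. B $$ (i,k) * B $$ (k,i))"
      using i by (subst sum.remove[of _ i]) auto
    also have "(\<Sum>k\<in>{0..<m} - {i}. B $$ (i,k) * B $$ (k,i)) = 0"
    proof (rule sum.neutral, intro ballI)
      fix k assume k: "k \<in> {0..<m} - {i}"
      show "B $$ (i,k) * B $$ (k,i) = 0"
      proof (cases "k < i")
        case True then show ?thesis using z[of i k] i by simp
      next
        case False then have "i < k" using k by auto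
        then show ?thesis using z[of k i] k by simp
      qed
    qed
    finally show ?thesis by simp
  qed
  show "diag_mat (B * B) = map (\<lambda>e. e * e) (diag_mat B)"
    unfolding diag_mat_def using d diag by simp
qed

lemma psd_eig: assumes X: "X \<in> carrier_mat m m" and p: "psd X" and e: "poly (char_poly X) e = 0"
  shows "Im e = 0 \<and> Re e \<ge> 0"
proof -
  have "eigenvalue X e" using eigenvalue_root_char_poly[OF X] e by simp
  then obtain v where ev: "eigenvector X v e" unfolding eigenvalue_def by blast
  then have v: "v \<in> carrier_vec m" and v0: "v \<noteq> 0\<^sub>v m" and Xv: "X *\<^sub>v v = e \<cdot>\<^sub>v v"
    unfolding eigenvector_def using X by auto
  have s: "conjugate v \<bullet> v > 0"
    using conjugate_square_greater_0_vec[OF v] v0 conjugate_vec_sprod_comm[OF v v] by simp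
  then have sI: "Im (conjugate v \<bullet> v) = 0" and sR: "Re (conjugate v \<bullet> v) > 0"
    by (auto simp: less_complex_def)
  have q: "conjugate v \<bullet> (X *\<^sub>v v) = e * (conjugate v \<bullet> v)"
    unfolding Xv using v by simp
  have "dim_vec v = dim_col X" using carrier_vecD[OF v] carrier_matD[OF X] by simp
  then have "Im (conjugate v \<bullet> (X *\<^sub>v v)) = 0 \<and> Re (conjugate v \<bullet> (X *\<^sub>v v)) \<ge> 0"
    using p unfolding psd_def by blast
  then have "Im e * Re (conjugate v \<bullet> v) = 0" "Re e * Re (conjugate v \<bullet> v) \<ge> 0"
    unfolding q using sI by simp_all
  then show ?thesis using sR by (simp add: zero_le_mult_iff)
qed

lemma Re_sum_list: "Re (sum_list xs) = (\<Sum>x\<leftarrow>xs. Re x)"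
  by (induct xs) auto

lemma tn_psd: assumes X: "X \<in> carrier_mat m m" and p: "psd X"
  shows "trace_norm X = Re (mtrace X)"
proof -
  have h: "mat_adjoint X = X" using p by (rule psd_herm)
  obtain es where es: "char_poly X = (\<Prod>e\<leftarrow>es. [:- e, 1:])" using char_poly_factorized[OF X] by blast
  obtain B P Q where sd: "schur_decomposition X es = (B,P,Q)" by (cases "schur_decomposition X es") auto
  from schur_decomposition[OF X es sd] have sim: "similar_mat_wit X B P Q" and ut: "upper_triangular B"
    and dg: "diag_mat B = es" by auto
  from sim X have B: "B \<in> carrier_mat m m" and P: "P \<in> carrier_mat m m" and Q: "Q \<in> carrier_mat m m"
    and PQ: "P * Q = 1\<^sub>m m" and QP: "Q * P = 1\<^sub>m m" and XB: "X = P * B * Q"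
    unfolding similar_mat_wit_def Let_def by auto
  have c1: "Q * (P * (B * Q)) = B * Q" by (rule cancel_l[OF Q P _ QP, of _ m]) (use B Q in simp)
  have XX: "X * X = P * (B * B) * Q"
    unfolding XB using P B Q c1 by (simp add: assoc_mult_mat[of _ m m _ m _ m])
  have "similar_mat (X * X) (B * B)"
    by (rule similar_matI[OF _ PQ QP XX]) (use P Q B X in simp)
  then have cXX: "char_poly (X * X) = char_poly (B * B)" by (rule char_poly_similar)
  note sq = ut_sq[OF B ut]
  have "char_poly (B * B) = (\<Prod>e\<leftarrow>map (\<lambda>e. e * e) es. [:- e, 1:])"
    using char_poly_upper_triangular[OF _ sq(1), of m] B sq(2) dg by simp
  then have tn: "trace_norm X = (\<Sum>e\<leftarrow>map (\<lambda>e. e * e) es. sqrt (Re e))"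
    using h cXX by (intro tn_char) simp
  have ev: "Im e = 0 \<and> Re e \<ge> 0" if "e \<in> set es" for e
  proof (rule psd_eig[OF X p])
    show "poly (char_poly X) e = 0" unfolding es using that
      by (simp add: poly_prod_list prod_list_zero_iff)
  qed
  have "(\<Sum>e\<leftarrow>map (\<lambda>e. e * e) es. sqrt (Re e)) = (\<Sum>e\<leftarrow>es. sqrt (Re (e * e)))"
    by (simp add: comp_def)
  also have "\<dots> = (\<Sum>e\<leftarrow>es. Re e)"
  proof (rule arg_cong[where f = sum_list], rule map_cong[OF refl])
    fix e assume "e \<in> set es"
    then have "Im e = 0" "Re e \<ge> 0" using ev by auto
    then show "sqrt (Re (e * e)) = Re e" by (simp add: power2_eq_square[symmetric])
  qed
  also have "\<dots> = Re (sum_list es)" by (simp add: Re_sum_list)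
  also have "sum_list es = mtrace B"
    unfolding dg[symmetric] diag_mat_def mtrace_def using B
    by (simp add: sum_list_sum_nth lessThan_atLeast0)
  also have "mtrace B = mtrace X"
  proof -
    have "mtrace X = mtrace ((P * B) * Q)" using XB by simp
    also have "\<dots> = mtrace (Q * (P * B))" by (rule mtrace_comm[of _ m m]) (use P B Q in simp_all)
    also have "Q * (P * B) = (Q * P) * B" by (rule assoc_mult_mat[symmetric, OF Q P B])
    also have "\<dots> = B" using QP B by simp
    finally show ?thesis by simp
  qed
  finally show ?thesis using tn by simp
qed

lemma sum_delta_lt: "(x::nat) < K \<Longrightarrow> (\<Sum>w<K. (if w = x then f w else 0)) = (f x :: complex)"
  by (simp add: sum.delta')

lemma kronL: assumes V: "V \<in> carrier_mat d d'" and Y: "Y \<in> carrier_mat (d' * 2) c"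
  and i: "i < d * 2" and j: "j < c"
  shows "(kron V (1\<^sub>m 2) * Y) $$ (i,j) = (\<Sum>p<d'. V $$ (i div 2, p) * Y $$ (p * 2 + i mod 2, j))"
proof -
  have dV: "dim_row V = d" "dim_col V = d'" using V by auto
  have dY: "dim_row Y = d' * 2" "dim_col Y = c" using Y by auto
  have "(kron V (1\<^sub>m 2) * Y) $$ (i,j) = (\<Sum>t<d'*2. kron V (1\<^sub>m 2) $$ (i,t) * Y $$ (t,j))"
    using i j dV dY by (simp add: scalar_prod_def lessThan_atLeast0)
  also have "\<dots> = (\<Sum>p<d'. \<Sum>q<2. kron V (1\<^sub>m 2) $$ (i,p*2+q) * Y $$ (p*2+q,j))"
    by (rule sum_split_prod)
  also have "\<dots> = (\<Sum>p<d'. \<Sum>q<2. (if q = i mod 2 then V $$ (i div 2, p) * Y $$ (p * 2 + i mod 2, j) else 0))"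
  proof (intro sum.cong refl)
    fix p q assume p: "p \<in> {..<d'}" and q: "q \<in> {..<2::nat}"
    have lt: "p*2+q < d'*2" using p q by auto
    have qq: "(p*2+q) div 2 = p" "(p*2+q) mod 2 = q" using q by auto
    show "kron V (1\<^sub>m 2) $$ (i,p*2+q) * Y $$ (p*2+q,j) = (if q = i mod 2 then V $$ (i div 2, p) * Y $$ (p * 2 + i mod 2, j) else 0)"
      using lt qq i dV q by auto
  qed
  also have "\<dots> = (\<Sum>p<d'. V $$ (i div 2, p) * Y $$ (p * 2 + i mod 2, j))"
    by (intro sum.cong refl) (rule sum_delta_lt, simp)
  finally show ?thesis .
qed

lemma kronR: assumes G: "G \<in> carrier_mat d' d" and Y: "Y \<in> carrier_mat c (d' * 2)"
  and i: "i < c" and j: "j < d * 2"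
  shows "(Y * kron G (1\<^sub>m 2)) $$ (i,j) = (\<Sum>q<d'. Y $$ (i, q * 2 + j mod 2) * G $$ (q, j div 2))"
proof -
  have dG: "dim_row G = d'" "dim_col G = d" using G by auto
  have dY: "dim_row Y = c" "dim_col Y = d' * 2" using Y by auto
  have "(Y * kron G (1\<^sub>m 2)) $$ (i,j) = (\<Sum>t<d'*2. Y $$ (i,t) * kron G (1\<^sub>m 2) $$ (t,j))"
    using i j dG dY by (simp add: scalar_prod_def lessThan_atLeast0)
  also have "\<dots> = (\<Sum>p<d'. \<Sum>q<2. Y $$ (i,p*2+q) * kron G (1\<^sub>m 2) $$ (p*2+q,j))"
    by (rule sum_split_prod)
  also have "\<dots> = (\<Sum>p<d'. \<Sum>q<2. (if q = j mod 2 then Y $$ (i, p * 2 + j mod 2) * G $$ (p, j div 2) else 0))"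
  proof (intro sum.cong refl)
    fix p q assume p: "p \<in> {..<d'}" and q: "q \<in> {..<2::nat}"
    have lt: "p*2+q < d'*2" using p q by auto
    have qq: "(p*2+q) div 2 = p" "(p*2+q) mod 2 = q" using q by auto
    show "Y $$ (i,p*2+q) * kron G (1\<^sub>m 2) $$ (p*2+q,j) = (if q = j mod 2 then Y $$ (i, p * 2 + j mod 2) * G $$ (p, j div 2) else 0)"
      using lt qq j dG q by auto
  qed
  also have "\<dots> = (\<Sum>q<d'. Y $$ (i, q * 2 + j mod 2) * G $$ (q, j div 2))"
    by (intro sum.cong refl) (rule sum_delta_lt, simp)
  finally show ?thesis .
qed

lemma diagL: assumes D: "(D::complex mat) \<in> carrier_mat m m" and DD: "\<And>x y. x < m \<Longrightarrow> y < m \<Longrightarrow> D $$ (x,y) = (if x = y \<and> c x then 1 else 0)"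
  and Y: "Y \<in> carrier_mat m k" and x: "x < m" and j: "j < k"
  shows "(D * Y) $$ (x,j) = (if c x then Y $$ (x,j) else 0)"
proof -
  have "(D * Y) $$ (x,j) = (\<Sum>w<m. D $$ (x,w) * Y $$ (w,j))"
    using D Y x j by (simp add: scalar_prod_def lessThan_atLeast0)
  also have "\<dots> = (\<Sum>w<m. (if w = x then (if c x then Y $$ (x,j) else 0) else 0))"
    by (intro sum.cong refl) (use DD x in auto)
  also have "\<dots> = (if c x then Y $$ (x,j) else 0)" by (rule sum_delta_lt[OF x])
  finally show ?thesis .
qed

lemma diagR: assumes D: "(D::complex mat) \<in> carrier_mat m m" and DD: "\<And>x y. x < m \<Longrightarrow> y < m \<Longrightarrow> D $$ (x,y) = (if x = y \<and> c x then 1 else 0)"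
  and Y: "Y \<in> carrier_mat k m" and i: "i < k" and y: "y < m"
  shows "(Y * D) $$ (i,y) = (if c y then Y $$ (i,y) else 0)"
proof -
  have "(Y * D) $$ (i,y) = (\<Sum>w<m. Y $$ (i,w) * D $$ (w,y))"
    using D Y i y by (simp add: scalar_prod_def lessThan_atLeast0)
  also have "\<dots> = (\<Sum>w<m. (if w = y then (if c y then Y $$ (i,y) else 0) else 0))"
    by (intro sum.cong refl) (use DD y in auto)
  also have "\<dots> = (if c y then Y $$ (i,y) else 0)" by (rule sum_delta_lt[OF y])
  finally show ?thesis .
qed

definition perm_mat :: "nat \<Rightarrow> (nat \<Rightarrow> nat) \<Rightarrow> complex mat" where
  "perm_mat K \<sigma> = mat K K (\<lambda>(q,r). if r = \<sigma> q then 1 else 0)"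

lemma perm_conj: assumes s: "\<And>q. q < K \<Longrightarrow> \<sigma> q < K" and X: "X \<in> carrier_mat K K"
  and q: "q < K" and t: "t < K"
  shows "(perm_mat K \<sigma> * X * mat_adjoint (perm_mat K \<sigma>)) $$ (q,t) = X $$ (\<sigma> q, \<sigma> t)"
proof -
  have PX: "(perm_mat K \<sigma> * X) $$ (q,u) = X $$ (\<sigma> q, u)" if u: "u < K" for u
  proof -
    have "(perm_mat K \<sigma> * X) $$ (q,u) = (\<Sum>r<K. perm_mat K \<sigma> $$ (q,r) * X $$ (r,u))"
      using X q u by (simp add: perm_mat_def scalar_prod_def lessThan_atLeast0)
    also have "\<dots> = (\<Sum>r<K. (if r = \<sigma> q then X $$ (\<sigma> q, u) else 0))"
      by (intro sum.cong refl) (use q in \<open>auto simp: perm_mat_def\<close>)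
    also have "\<dots> = X $$ (\<sigma> q, u)" by (rule sum_delta_lt[OF s[OF q]])
    finally show ?thesis .
  qed
  have "(perm_mat K \<sigma> * X * mat_adjoint (perm_mat K \<sigma>)) $$ (q,t) = (\<Sum>u<K. (perm_mat K \<sigma> * X) $$ (q,u) * cnj (perm_mat K \<sigma> $$ (t,u)))"
    using X q t by (simp add: perm_mat_def scalar_prod_def lessThan_atLeast0)
  also have "\<dots> = (\<Sum>u<K. (if u = \<sigma> t then X $$ (\<sigma> q, \<sigma> t) else 0))"
    by (intro sum.cong refl) (use t PX in \<open>auto simp: perm_mat_def\<close>)
  also have "\<dots> = X $$ (\<sigma> q, \<sigma> t)" by (rule sum_delta_lt[OF s[OF t]])
  finally show ?thesis .
qed

lemma perm_unitary: assumes s: "\<And>q. q < K \<Longrightarrow> \<sigma> q < K" and p: "\<And>r. r < K \<Longrightarrow> \<pi> r < K"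
  and sp: "\<And>r. r < K \<Longrightarrow> \<sigma> (\<pi> r) = r" and ps: "\<And>q. q < K \<Longrightarrow> \<pi> (\<sigma> q) = q"
  shows "unitary K (perm_mat K \<sigma>)"
proof -
  have C: "perm_mat K \<sigma> \<in> carrier_mat K K" by (simp add: perm_mat_def)
  have 1: "mat_adjoint (perm_mat K \<sigma>) * perm_mat K \<sigma> = 1\<^sub>m K"
  proof (rule eq_matI)
    fix r r' assume "r < dim_row (1\<^sub>m K)" "r' < dim_col (1\<^sub>m K)"
    then have r: "r < K" and r': "r' < K" by auto
    have "(mat_adjoint (perm_mat K \<sigma>) * perm_mat K \<sigma>) $$ (r,r') = (\<Sum>q<K. cnj (perm_mat K \<sigma> $$ (q,r)) * perm_mat K \<sigma> $$ (q,r'))"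
      using r r' by (simp add: perm_mat_def scalar_prod_def lessThan_atLeast0)
    also have "\<dots> = (\<Sum>q<K. (if q = \<pi> r then (if r' = r then 1 else 0) else 0))"
    proof (intro sum.cong refl)
      fix q assume "q \<in> {..<K}"
      then have q: "q < K" by simp
      have "(r = \<sigma> q) = (q = \<pi> r)" using sp[OF r] ps[OF q] by metis
      then show "cnj (perm_mat K \<sigma> $$ (q,r)) * perm_mat K \<sigma> $$ (q,r') = (if q = \<pi> r then (if r' = r then 1 else 0) else 0)"
        using q r r' by (auto simp: perm_mat_def)
    qed
    also have "\<dots> = (if r' = r then 1 else 0)" by (rule sum_delta_lt[OF p[OF r]])
    finally show "(mat_adjoint (perm_mat K \<sigma>) * perm_mat K \<sigma>) $$ (r,r') = 1\<^sub>m K $$ (r,r')"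
      using r r' by auto
  qed (simp_all add: perm_mat_def)
  have 2: "perm_mat K \<sigma> * mat_adjoint (perm_mat K \<sigma>) = 1\<^sub>m K"
  proof (rule eq_matI)
    fix q q' assume "q < dim_row (1\<^sub>m K)" "q' < dim_col (1\<^sub>m K)"
    then have q: "q < K" and q': "q' < K" by auto
    have "(perm_mat K \<sigma> * mat_adjoint (perm_mat K \<sigma>)) $$ (q,q') = (\<Sum>r<K. perm_mat K \<sigma> $$ (q,r) * cnj (perm_mat K \<sigma> $$ (q',r)))"
      using q q' by (simp add: perm_mat_def scalar_prod_def lessThan_atLeast0)
    also have "\<dots> = (\<Sum>r<K. (if r = \<sigma> q then (if \<sigma> q' = \<sigma> q then 1 else 0) else 0))"
      by (intro sum.cong refl) (use q q' in \<open>auto simp: perm_mat_def\<close>)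
    also have "\<dots> = (if \<sigma> q' = \<sigma> q then 1 else 0)" by (rule sum_delta_lt[OF s[OF q]])
    also have "(\<sigma> q' = \<sigma> q) = (q' = q)" using ps[OF q] ps[OF q'] by metis
    finally show "(perm_mat K \<sigma> * mat_adjoint (perm_mat K \<sigma>)) $$ (q,q') = 1\<^sub>m K $$ (q,q')"
      using q q' by auto
  qed (simp_all add: perm_mat_def)
  show ?thesis unfolding unitary_def using C 1 2 by blast
qed

lemma kron_conj: assumes V: "V \<in> carrier_mat d d" and T: "T \<in> carrier_mat (d*2) (d*2)"
  and r: "r < d*2" and s: "s < d*2"
  shows "(kron V (1\<^sub>m 2) * T * mat_adjoint (kron V (1\<^sub>m 2))) $$ (r,s)
    = (V * mat d d (\<lambda>(p,q). T $$ (p*2 + r mod 2, q*2 + s mod 2)) * mat_adjoint V) $$ (r div 2, s div 2)"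
proof -
  let ?X = "mat d d (\<lambda>(p,q). T $$ (p*2 + r mod 2, q*2 + s mod 2))"
  have dV: "dim_row V = d" "dim_col V = d" using V by auto
  have Va: "mat_adjoint V \<in> carrier_mat d d" using V by simp
  have KV: "kron V (1\<^sub>m 2) \<in> carrier_mat (d*2) (d*2)" using V by simp
  have VT: "kron V (1\<^sub>m 2) * T \<in> carrier_mat (d*2) (d*2)" using KV T by simp
  have adj: "mat_adjoint (kron V (1\<^sub>m 2)) = kron (mat_adjoint V) (1\<^sub>m 2)" by (simp add: kron_adj)
  have r2: "r div 2 < d" and s2: "s div 2 < d" using r s by auto
  have pq: "p * 2 + r mod 2 < d * 2" "q * 2 + s mod 2 < d * 2" if "p < d" "q < d" for p q
    using that by auto
  have "(kron V (1\<^sub>m 2) * T * mat_adjoint (kron V (1\<^sub>m 2))) $$ (r,s)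
     = (\<Sum>q<d. (kron V (1\<^sub>m 2) * T) $$ (r, q * 2 + s mod 2) * mat_adjoint V $$ (q, s div 2))"
    unfolding adj by (rule kronR[OF Va VT r s])
  also have "\<dots> = (\<Sum>q<d. (\<Sum>p<d. V $$ (r div 2, p) * T $$ (p * 2 + r mod 2, q * 2 + s mod 2)) * mat_adjoint V $$ (q, s div 2))"
    by (intro sum.cong refl arg_cong2[where f = "(*)"] kronL[OF V T r]) (use pq in auto)
  also have "\<dots> = (V * ?X * mat_adjoint V) $$ (r div 2, s div 2)"
  proof -
    have VX: "(V * ?X) $$ (r div 2, q) = (\<Sum>p<d. V $$ (r div 2, p) * T $$ (p * 2 + r mod 2, q * 2 + s mod 2))"
      if q: "q < d" for q
      using dV r2 q by (simp add: scalar_prod_def lessThan_atLeast0)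
    have "(V * ?X * mat_adjoint V) $$ (r div 2, s div 2) = (\<Sum>q<d. (V * ?X) $$ (r div 2, q) * mat_adjoint V $$ (q, s div 2))"
      using dV r2 s2 by (simp add: scalar_prod_def lessThan_atLeast0)
    then show ?thesis using VX by simp
  qed
  finally show ?thesis .
qed

lemma unitary_kron: assumes u: "unitary k V" shows "unitary (k * m) (kron V (1\<^sub>m m))"
proof -
  have V: "V \<in> carrier_mat k k" and VV: "mat_adjoint V * V = 1\<^sub>m k" "V * mat_adjoint V = 1\<^sub>m k"
    using u by (auto simp: unitary_def)
  have Va: "mat_adjoint V \<in> carrier_mat k k" using V by simp
  have o: "(1\<^sub>m m :: complex mat) \<in> carrier_mat m m" by simp
  have "mat_adjoint (kron V (1\<^sub>m m)) * kron V (1\<^sub>m m) = kron (mat_adjoint V * V) (1\<^sub>m m * 1\<^sub>m m)"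
    unfolding kron_adj adj_one by (rule kron_mult[OF Va o V o])
  also have "\<dots> = 1\<^sub>m (k * m)" unfolding VV by (simp add: kron_one)
  finally have 1: "mat_adjoint (kron V (1\<^sub>m m)) * kron V (1\<^sub>m m) = 1\<^sub>m (k * m)" .
  have "kron V (1\<^sub>m m) * mat_adjoint (kron V (1\<^sub>m m)) = kron (V * mat_adjoint V) (1\<^sub>m m * 1\<^sub>m m)"
    unfolding kron_adj adj_one by (rule kron_mult[OF V o Va o])
  also have "\<dots> = 1\<^sub>m (k * m)" unfolding VV by (simp add: kron_one)
  finally have 2: "kron V (1\<^sub>m m) * mat_adjoint (kron V (1\<^sub>m m)) = 1\<^sub>m (k * m)" .
  show ?thesis unfolding unitary_def using 1 2 V by simp
qed

lemma unitary2_unitary: assumes "unitary2 U" shows "unitary 2 U"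
proof -
  have U: "U \<in> carrier_mat 2 2" and UU: "mat_adjoint U * U = 1\<^sub>m 2" using assms by (auto simp: unitary2_def)
  have "U * mat_adjoint U = 1\<^sub>m 2" by (rule mat_mult_left_right_inverse[OF _ U UU]) (use U in simp)
  then show ?thesis using U UU by (simp add: unitary_def)
qed

definition Ekm :: "nat \<Rightarrow> complex mat" where "Ekm k = proj (unit_vec 2 k)"

lemma Ekm_carrier[simp]: "Ekm k \<in> carrier_mat 2 2"
  by (simp add: Ekm_def proj_def unit_vec_def)

lemma Ekm_dim[simp]: "dim_row (Ekm k) = 2" "dim_col (Ekm k) = 2"
  by (simp_all add: Ekm_def proj_def)

lemma Ekm_index: "i < 2 \<Longrightarrow> j < 2 \<Longrightarrow> Ekm k $$ (i,j) = (if i = k \<and> j = k then 1 else 0)"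
  by (simp add: Ekm_def proj_def unit_vec_def)

lemma proj_col: assumes U: "U \<in> carrier_mat 2 2" and k: "k < 2"
  shows "proj (col U k) = U * Ekm k * mat_adjoint U"
proof (rule eq_matI)
  have dU: "dim_row U = 2" "dim_col U = 2" using U by auto
  fix i j assume "i < dim_row (U * Ekm k * mat_adjoint U)" "j < dim_col (U * Ekm k * mat_adjoint U)"
  then have i: "i < 2" and j: "j < 2" using dU by auto
  have UE: "(U * Ekm k) $$ (i, b) = (if b = k then U $$ (i, k) else 0)" if b: "b < 2" for b
  proof -
    have "(U * Ekm k) $$ (i, b) = (\<Sum>a<2. U $$ (i,a) * Ekm k $$ (a,b))"
      using dU i b by (simp add: scalar_prod_def lessThan_atLeast0)
    also have "\<dots> = (\<Sum>a<2. (if a = k then (if b = k then U $$ (i, k) else 0) else 0))"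
      by (intro sum.cong refl) (use b in \<open>simp add: Ekm_index\<close>)
    also have "\<dots> = (if b = k then U $$ (i, k) else 0)"
      using b by (simp add: sum.delta')
    finally show ?thesis .
  qed
  have "(U * Ekm k * mat_adjoint U) $$ (i,j) = (\<Sum>b<2. (U * Ekm k) $$ (i, b) * cnj (U $$ (j, b)))"
    using dU i j by (simp add: scalar_prod_def lessThan_atLeast0)
  also have "\<dots> = (\<Sum>b<2. (if b = k then U $$ (i, k) * cnj (U $$ (j, k)) else 0))"
    by (intro sum.cong refl) (use UE in auto)
  also have "\<dots> = (if k < 2 then U $$ (i, k) * cnj (U $$ (j, k)) else 0)"
    by (simp add: sum.delta')
  also have "\<dots> = proj (col U k) $$ (i,j)"
    using dU i j k by (simp add: proj_def)
  finally show "proj (col U k) $$ (i,j) = (U * Ekm k * mat_adjoint U) $$ (i,j)" by simp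
qed (use U in \<open>simp_all add: proj_def\<close>)

lemma div_lt2: "x < 2 * n \<Longrightarrow> x div n < (2::nat)"
  by (simp add: div_lt mult.commute)

locale qsetup =
  fixes U :: "complex mat" and n :: nat and \<rho> :: "complex mat"
  assumes U2: "unitary2 U" and npos: "n > 0" and dens: "density (2*n) \<rho>"
begin

definition "Ut = kron U (1\<^sub>m n)"
definition "Fk k = kron (Ekm k) (1\<^sub>m n)"
definition "PP k = kron (proj (col U k)) (1\<^sub>m n)"
definition "R = mat_adjoint Ut * \<rho> * Ut"

lemma Uc: "U \<in> carrier_mat 2 2" using U2 by (simp add: unitary2_def)

lemma Ut_u: "unitary (2*n) Ut"
  unfolding Ut_def by (rule unitary_kron[OF unitary2_unitary[OF U2]])

lemma Utc[simp]: "Ut \<in> carrier_mat (2*n) (2*n)" using Ut_u by (simp add: unitary_def)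
lemma Utac[simp]: "mat_adjoint Ut \<in> carrier_mat (2*n) (2*n)" using Utc by (rule adj_carrier)
lemma Ut_dim[simp]: "dim_row Ut = 2*n" "dim_col Ut = 2*n" using carrier_matD[OF Utc] by auto
lemma UtUt: "mat_adjoint Ut * Ut = 1\<^sub>m (2*n)" "Ut * mat_adjoint Ut = 1\<^sub>m (2*n)"
  using Ut_u by (simp_all add: unitary_def)

lemma rhoc[simp]: "\<rho> \<in> carrier_mat (2*n) (2*n)" using dens by (simp add: density_def)
lemma rho_dim[simp]: "dim_row \<rho> = 2*n" "dim_col \<rho> = 2*n" using carrier_matD[OF rhoc] by auto
lemma rho_psd: "psd \<rho>" using dens by (simp add: density_def)
lemma rho_tr: "mtrace \<rho> = 1" using dens by (simp add: density_def)

lemma Fkc[simp]: "Fk k \<in> carrier_mat (2*n) (2*n)"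
  unfolding Fk_def using kron_carrier[OF Ekm_carrier[of k] one_carrier_mat[of n]] by simp

lemma Fk_dim[simp]: "dim_row (Fk k) = 2*n" "dim_col (Fk k) = 2*n" using carrier_matD[OF Fkc[of k]] by auto

lemma Fk_idx: assumes x: "x < 2*n" and y: "y < 2*n"
  shows "Fk k $$ (x,y) = (if x = y \<and> x div n = k then 1 else 0)"
proof -
  have xd: "x div n < 2" and yd: "y div n < 2" using x y by (simp_all add: div_lt2)
  have xm: "x mod n < n" "y mod n < n" using npos by simp_all
  have eq: "(x div n = y div n \<and> x mod n = y mod n) = (x = y)" by (metis div_mult_mod_eq)
  have "Fk k $$ (x,y) = Ekm k $$ (x div n, y div n) * 1\<^sub>m n $$ (x mod n, y mod n)"
    unfolding Fk_def using x y by (simp add: mult.commute)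
  also have "\<dots> = (if x = y \<and> x div n = k then 1 else 0)"
    using xd yd xm eq by (auto simp: Ekm_index)
  finally show ?thesis .
qed

lemma Fk_herm: "mat_adjoint (Fk k) = Fk k"
proof (rule eq_matI)
  fix i j assume "i < dim_row (Fk k)" "j < dim_col (Fk k)"
  then have i: "i < 2*n" and j: "j < 2*n" using carrier_matD[OF Fkc[of k]] by auto
  then show "mat_adjoint (Fk k) $$ (i,j) = Fk k $$ (i,j)"
    by (auto simp: Fk_idx)
qed simp_all

lemma PP_eq: assumes k: "k < 2" shows "PP k = Ut * Fk k * mat_adjoint Ut"
proof -
  have o: "(1\<^sub>m n :: complex mat) \<in> carrier_mat n n" by simp
  have Ua: "mat_adjoint U \<in> carrier_mat 2 2" using Uc by simp
  have UE: "U * Ekm k \<in> carrier_mat 2 2" using Uc by simp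
  have oo: "(1\<^sub>m n * 1\<^sub>m n :: complex mat) \<in> carrier_mat n n" by simp
  have "PP k = kron (U * Ekm k * mat_adjoint U) (1\<^sub>m n * 1\<^sub>m n * 1\<^sub>m n)"
    unfolding PP_def proj_col[OF Uc k] by simp
  also have "\<dots> = kron (U * Ekm k) (1\<^sub>m n * 1\<^sub>m n) * kron (mat_adjoint U) (1\<^sub>m n)"
    by (rule kron_mult[symmetric, OF UE oo Ua o])
  also have "kron (U * Ekm k) (1\<^sub>m n * 1\<^sub>m n) = kron U (1\<^sub>m n) * kron (Ekm k) (1\<^sub>m n)"
    by (rule kron_mult[symmetric, OF Uc o Ekm_carrier o])
  also have "kron (mat_adjoint U) (1\<^sub>m n) = mat_adjoint Ut"
    unfolding Ut_def kron_adj by simp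
  finally show ?thesis unfolding Ut_def Fk_def .
qed

lemma PPc[simp]: "k < 2 \<Longrightarrow> PP k \<in> carrier_mat (2*n) (2*n)"
  unfolding PP_eq by simp

lemma PP_herm: "k < 2 \<Longrightarrow> mat_adjoint (PP k) = PP k"
  unfolding PP_eq by (simp add: adj_conj[OF Utc Fkc] Fk_herm)

lemma Rc[simp]: "R \<in> carrier_mat (2*n) (2*n)" unfolding R_def by simp
lemma R_dim[simp]: "dim_row R = 2*n" "dim_col R = 2*n" using carrier_matD[OF Rc] by auto

lemma rho_eq: "\<rho> = Ut * R * mat_adjoint Ut"
proof -
  have "Ut * R = Ut * (mat_adjoint Ut * (\<rho> * Ut))"
    unfolding R_def by (simp add: assoc_mult_mat[OF Utac rhoc Utc])
  also have "\<dots> = \<rho> * Ut" by (rule cancel_l[OF Utc Utac _ UtUt(2), of _ "2*n"]) simp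
  finally have "Ut * R * mat_adjoint Ut = \<rho> * Ut * mat_adjoint Ut" by simp
  also have "\<dots> = \<rho> * (Ut * mat_adjoint Ut)" by (rule assoc_mult_mat[OF rhoc Utc Utac])
  also have "\<dots> = \<rho>" unfolding UtUt by simp
  finally show ?thesis by simp
qed

lemma PRP: assumes a: "a < 2" and b: "b < 2"
  shows "PP b * \<rho> * PP a = Ut * (Fk b * R * Fk a) * mat_adjoint Ut"
proof -
  have "PP b * \<rho> = Ut * (Fk b * R) * mat_adjoint Ut"
    unfolding PP_eq[OF b] by (subst rho_eq, rule uconj_mult[OF Utc Fkc Rc UtUt(1)])
  moreover have FR: "Fk b * R \<in> carrier_mat (2*n) (2*n)" by (rule mult_sq[OF Fkc Rc])
  ultimately show ?thesis
    unfolding PP_eq[OF a] by (simp add: uconj_mult[OF Utc FR Fkc UtUt(1)])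
qed

lemma FRF: assumes x: "x < 2*n" and y: "y < 2*n"
  shows "(Fk b * R * Fk a) $$ (x,y) = (if x div n = b \<and> y div n = a then R $$ (x,y) else 0)"
proof -
  have FR: "(Fk b * R) $$ (x,z) = (if x div n = b then R $$ (x,z) else 0)" if z: "z < 2*n" for z
    by (rule diagL[OF Fkc Fk_idx Rc x z])
  have "(Fk b * R * Fk a) $$ (x,y) = (if y div n = a then (Fk b * R) $$ (x,y) else 0)"
    by (rule diagR[OF Fkc Fk_idx mult_sq[OF Fkc Rc] x y])
  then show ?thesis using FR[OF y] by simp
qed

lemma ket_idx: "i < 2 \<Longrightarrow> ket 2 k $$ (i,0) = (if i = k then 1 else 0)"
  by (simp add: ket_def)

lemma ket_dim[simp]: "dim_row (ket 2 k) = 2" "dim_col (ket 2 k) = 1"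
  by (simp_all add: ket_def)

lemma Mc[simp]: "meas_iso U n \<in> carrier_mat (2*n*2) (2*n)"
proof -
  have kc: "ket 2 k \<in> carrier_mat 2 1" for k by (rule carrier_matI) simp_all
  have c: "kron (PP k) (ket 2 k) \<in> carrier_mat (2*n*2) (2*n*1)" if "k < 2" for k
    by (rule kron_carrier[OF PPc[OF that] kc])
  have c0: "kron (PP 0) (ket 2 0) \<in> carrier_mat (2*n*2) (2*n*1)" by (rule c) simp
  have c1: "kron (PP 1) (ket 2 1) \<in> carrier_mat (2*n*2) (2*n*1)" by (rule c) simp
  have "meas_iso U n \<in> carrier_mat (2*n*2) (2*n*1)"
    unfolding meas_iso_def PP_def[symmetric] by (rule add_carrier_mat[OF c1])
  then show ?thesis by simp
qed

lemma M_idx: assumes r: "r < 2*n*2" and y: "y < 2*n"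
  shows "meas_iso U n $$ (r,y) = PP (r mod 2) $$ (r div 2, y)"
proof -
  have d: "dim_row (PP k) = 2*n" "dim_col (PP k) = 2*n" if "k < 2" for k using carrier_matD[OF PPc[OF that]] by auto
  have r2: "r mod 2 < 2" by simp
  have "kron (PP k) (ket 2 k) $$ (r,y) = PP k $$ (r div 2, y) * (if r mod 2 = k then 1 else 0)" if k: "k < 2" for k
    using d[OF k] r y by (simp add: ket_idx)
  note K = this
  have "meas_iso U n $$ (r,y) = kron (PP 0) (ket 2 0) $$ (r,y) + kron (PP 1) (ket 2 1) $$ (r,y)"
    unfolding meas_iso_def PP_def[symmetric] using d[of 1] r y by (intro index_add_mat) simp_all
  also have "\<dots> = PP 0 $$ (r div 2, y) * (if r mod 2 = 0 then 1 else 0) + PP 1 $$ (r div 2, y) * (if r mod 2 = 1 then 1 else 0)"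
    using K[of 0] K[of 1] by simp
  also have "\<dots> = PP (r mod 2) $$ (r div 2, y)"
  proof (cases "r mod 2 = 0")
    case True then show ?thesis by simp
  next
    case False then have "r mod 2 = 1" by arith
    then show ?thesis by simp
  qed
  finally show ?thesis .
qed

end

lemma lt2: "(x::nat) < d \<Longrightarrow> (c::nat) < 2 \<Longrightarrow> x * 2 + c < d * 2" by linarith

lemma div2_lt: "(r::nat) < d * 2 \<Longrightarrow> r div 2 < d" by linarith

context qsetup begin

lemma M_dim[simp]: "dim_row (meas_iso U n) = 2*n*2" "dim_col (meas_iso U n) = 2*n"
  using carrier_matD[OF Mc] by auto

lemma PP_dim[simp]: "k < 2 \<Longrightarrow> dim_row (PP k) = 2*n" "k < 2 \<Longrightarrow> dim_col (PP k) = 2*n"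
  using carrier_matD[OF PPc] by auto

lemma tau_idx: assumes r: "r < 2*n*2" and s: "s < 2*n*2"
  shows "(meas_iso U n * \<rho> * mat_adjoint (meas_iso U n)) $$ (r,s)
       = (PP (r mod 2) * \<rho> * PP (s mod 2)) $$ (r div 2, s div 2)"
proof -
  let ?M = "meas_iso U n"
  have a: "r mod 2 < 2" and b: "s mod 2 < 2" by simp_all
  have r2: "r div 2 < 2*n" and s2: "s div 2 < 2*n" using div2_lt[OF r] div2_lt[OF s] by auto
  have Mr: "(?M * \<rho>) $$ (r,z) = (PP (r mod 2) * \<rho>) $$ (r div 2, z)" if z: "z < 2*n" for z
  proof -
    have "(?M * \<rho>) $$ (r,z) = (\<Sum>y\<in>{0..<2*n}. ?M $$ (r,y) * \<rho> $$ (y,z))"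
      using r z by (simp add: scalar_prod_def)
    also have "\<dots> = (\<Sum>y\<in>{0..<2*n}. PP (r mod 2) $$ (r div 2, y) * \<rho> $$ (y,z))"
      by (intro sum.cong refl) (simp add: M_idx[OF r])
    also have "\<dots> = (PP (r mod 2) * \<rho>) $$ (r div 2, z)"
      using r2 z a by (simp add: scalar_prod_def)
    finally show ?thesis .
  qed
  have "(?M * \<rho> * mat_adjoint ?M) $$ (r,s) = (\<Sum>z\<in>{0..<2*n}. (?M * \<rho>) $$ (r,z) * cnj (?M $$ (s,z)))"
    using r s by (simp add: scalar_prod_def)
  also have "\<dots> = (\<Sum>z\<in>{0..<2*n}. (PP (r mod 2) * \<rho>) $$ (r div 2, z) * cnj (PP (s mod 2) $$ (s div 2, z)))"
    by (intro sum.cong refl) (simp add: M_idx[OF s] Mr)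
  also have "\<dots> = (PP (r mod 2) * \<rho> * mat_adjoint (PP (s mod 2))) $$ (r div 2, s div 2)"
    using r2 s2 a b by (simp add: scalar_prod_def)
  also have "mat_adjoint (PP (s mod 2)) = PP (s mod 2)" using b by (rule PP_herm)
  finally show ?thesis .
qed

lemma PT_idx: assumes r: "r < 2*n*2" and s: "s < 2*n*2"
  shows "partial_transpose2 (2*n) 2 (meas_iso U n * \<rho> * mat_adjoint (meas_iso U n)) $$ (r,s)
       = (Ut * (Fk (s mod 2) * R * Fk (r mod 2)) * mat_adjoint Ut) $$ (r div 2, s div 2)"
proof -
  let ?r = "(r div 2) * 2 + s mod 2" and ?s = "(s div 2) * 2 + r mod 2"
  have lt: "?r < 2*n*2" "?s < 2*n*2" using div2_lt[OF r] div2_lt[OF s] by (simp_all add: lt2)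
  have dm: "?r div 2 = r div 2" "?r mod 2 = s mod 2" "?s div 2 = s div 2" "?s mod 2 = r mod 2" by auto
  have "partial_transpose2 (2*n) 2 (meas_iso U n * \<rho> * mat_adjoint (meas_iso U n)) $$ (r,s)
      = (meas_iso U n * \<rho> * mat_adjoint (meas_iso U n)) $$ (?r, ?s)"
    using r s by (simp add: partial_transpose2_def)
  also have "\<dots> = (PP (s mod 2) * \<rho> * PP (r mod 2)) $$ (r div 2, s div 2)"
    unfolding tau_idx[OF lt] dm ..
  also have "\<dots> = (Ut * (Fk (s mod 2) * R * Fk (r mod 2)) * mat_adjoint Ut) $$ (r div 2, s div 2)"
    by (subst PRP) simp_all
  finally show ?thesis .
qed

definition "T0 = mat (2*n*2) (2*n*2) (\<lambda>(i,j). (Fk (j mod 2) * R * Fk (i mod 2)) $$ (i div 2, j div 2))"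
definition "W = kron Ut (1\<^sub>m 2)"

lemma T0c[simp]: "T0 \<in> carrier_mat (2*n*2) (2*n*2)" by (simp add: T0_def)

lemma W_u: "unitary (2*n*2) W" unfolding W_def by (rule unitary_kron[OF Ut_u])

lemma PT_eq: "partial_transpose2 (2*n) 2 (meas_iso U n * \<rho> * mat_adjoint (meas_iso U n)) = W * T0 * mat_adjoint W"
proof (rule eq_matI)
  fix r s assume "r < dim_row (W * T0 * mat_adjoint W)" "s < dim_col (W * T0 * mat_adjoint W)"
  then have r: "r < 2*n*2" and s: "s < 2*n*2" by (simp_all add: W_def)
  have X: "mat (2*n) (2*n) (\<lambda>(p,q). T0 $$ (p*2 + r mod 2, q*2 + s mod 2)) = Fk (s mod 2) * R * Fk (r mod 2)"
  proof (rule eq_matI)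
    fix p q assume "p < dim_row (Fk (s mod 2) * R * Fk (r mod 2))" "q < dim_col (Fk (s mod 2) * R * Fk (r mod 2))"
    then have p: "p < 2*n" and q: "q < 2*n" by simp_all
    have lt: "p*2 + r mod 2 < 2*n*2" "q*2 + s mod 2 < 2*n*2" using p q by (simp_all add: lt2)
    have dm: "(p*2 + r mod 2) div 2 = p" "(p*2 + r mod 2) mod 2 = r mod 2"
      "(q*2 + s mod 2) div 2 = q" "(q*2 + s mod 2) mod 2 = s mod 2" by auto
    show "mat (2*n) (2*n) (\<lambda>(p,q). T0 $$ (p*2 + r mod 2, q*2 + s mod 2)) $$ (p,q) = (Fk (s mod 2) * R * Fk (r mod 2)) $$ (p,q)"
      using p q lt dm by (simp add: T0_def)
  qed simp_all
  have "(W * T0 * mat_adjoint W) $$ (r,s) = (Ut * (Fk (s mod 2) * R * Fk (r mod 2)) * mat_adjoint Ut) $$ (r div 2, s div 2)"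
    unfolding W_def kron_conj[OF Utc T0c r s] X ..
  then show "partial_transpose2 (2*n) 2 (meas_iso U n * \<rho> * mat_adjoint (meas_iso U n)) $$ (r,s) = (W * T0 * mat_adjoint W) $$ (r,s)"
    using PT_idx[OF r s] by simp
qed (simp_all add: W_def partial_transpose2_def)

end

lemma ifh1: assumes "a = 0 \<or> a = (1::nat)" "b = 0 \<or> b = 1"
  shows "(if a = 1 - b \<and> b = 1 - a then X else 0) = (if a = b then 0 else X)"
  using assms by (elim disjE) simp_all

lemma ifh2: assumes "a = 0 \<or> a = (1::nat)" "b = 0 \<or> b = 1"
  shows "(if a = 1 - b \<and> b = a then X else 0) = 0"
  using assms by (elim disjE) simp_all

lemma ifh3: assumes "a = 0 \<or> a = (1::nat)" "b = 0 \<or> b = 1"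
  shows "(if a = b \<and> b = 1 - a then X else 0) = 0"
  using assms by (elim disjE) simp_all

context qsetup begin

definition "sg q = (if q < 2*n then q*2 + q div n else (q - 2*n)*2 + (1 - (q - 2*n) div n))"
definition "pinv r = (if r mod 2 = (r div 2) div n then r div 2 else 2*n + r div 2)"

lemma sg_lo: assumes q: "q < 2*n" shows "sg q div 2 = q" "sg q mod 2 = q div n"
proof -
  have d: "q div n < 2" using q by (rule div_lt2)
  show "sg q div 2 = q" "sg q mod 2 = q div n" using q d by (simp_all add: sg_def)
qed

lemma sg_hi: assumes q1: "\<not> q < 2*n" and q2: "q < 2*n*2"
  shows "sg q div 2 = q - 2*n" "sg q mod 2 = 1 - (q - 2*n) div n"
proof -
  have x: "q - 2*n < 2*n" using q1 q2 by simp
  have d: "(q - 2*n) div n < 2" using x by (rule div_lt2)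
  have "(q - 2*n) div n = 0 \<or> (q - 2*n) div n = 1" using d by arith
  then show "sg q div 2 = q - 2*n" "sg q mod 2 = 1 - (q - 2*n) div n" using q1 by (auto simp: sg_def)
qed

lemma sg_lt: assumes q: "q < 2*n*2" shows "sg q < 2*n*2"
proof (cases "q < 2*n")
  case True
  have d: "q div n < 2" using True by (rule div_lt2)
  show ?thesis using True d unfolding sg_def by (simp add: lt2)
next
  case False
  have x: "q - 2*n < 2*n" using False q by simp
  show ?thesis using False x unfolding sg_def by (simp add: lt2)
qed

lemma pinv_lt: assumes r: "r < 2*n*2" shows "pinv r < 2*n*2"
  using div2_lt[OF r] unfolding pinv_def by auto

lemma sg_pinv: assumes r: "r < 2*n*2" shows "sg (pinv r) = r"
proof -
  let ?x = "r div 2"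
  have x: "?x < 2*n" using div2_lt[OF r] .
  have d: "?x div n < 2" using x by (rule div_lt2)
  have m: "r mod 2 < 2" by simp
  have rr: "r = ?x * 2 + r mod 2" by simp
  show ?thesis
  proof (cases "r mod 2 = ?x div n")
    case True
    then have "pinv r = ?x" by (simp add: pinv_def)
    moreover have "sg ?x = ?x * 2 + ?x div n" using x by (simp add: sg_def)
    ultimately show ?thesis using True[symmetric] by simp
  next
    case False
    then have e: "1 - ?x div n = r mod 2" using d m by arith
    have "pinv r = 2*n + ?x" using False by (simp add: pinv_def)
    moreover have "sg (2*n + ?x) = ?x * 2 + (1 - ?x div n)" by (simp add: sg_def)
    ultimately show ?thesis unfolding e by simp
  qed
qed

lemma pinv_sg: assumes q: "q < 2*n*2" shows "pinv (sg q) = q"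
proof (cases "q < 2*n")
  case True
  then show ?thesis using sg_lo[OF True] unfolding pinv_def by simp
next
  case False
  note h = sg_hi[OF False q]
  have x: "q - 2*n < 2*n" using False q by simp
  have d: "(q - 2*n) div n < 2" using x by (rule div_lt2)
  have "(q - 2*n) div n = 0 \<or> (q - 2*n) div n = 1" using d by arith
  then have "1 - (q - 2*n) div n \<noteq> (q - 2*n) div n" by auto
  then show ?thesis using h False unfolding pinv_def by simp
qed

definition "Pm = perm_mat (2*n*2) sg"

lemma Pm_u: "unitary (2*n*2) Pm"
  unfolding Pm_def by (rule perm_unitary[OF sg_lt pinv_lt sg_pinv pinv_sg])

definition "Dd = Fk 0 * R * Fk 0 + Fk 1 * R * Fk 1"
definition "Zm = R - Dd"

lemma Ddc[simp]: "Dd \<in> carrier_mat (2*n) (2*n)" unfolding Dd_def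
  by (rule add_carrier_mat[OF mult_sq[OF mult_sq[OF Fkc Rc] Fkc]])
lemma Zmc[simp]: "Zm \<in> carrier_mat (2*n) (2*n)" unfolding Zm_def
  by (rule minus_carrier_mat[OF Ddc])

lemma Dd_idx: assumes x: "x < 2*n" and y: "y < 2*n"
  shows "Dd $$ (x,y) = (if x div n = y div n then R $$ (x,y) else 0)"
proof -
  have dx: "x div n < 2" and dy: "y div n < 2" using x y by (simp_all add: div_lt2)
  have "Dd $$ (x,y) = (Fk 0 * R * Fk 0) $$ (x,y) + (Fk 1 * R * Fk 1) $$ (x,y)"
    unfolding Dd_def using x y by simp
  also have "\<dots> = (if x div n = y div n then R $$ (x,y) else 0)"
  proof -
    have "x div n = 0 \<or> x div n = 1" "y div n = 0 \<or> y div n = 1" using dx dy by arith+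
    then show ?thesis unfolding FRF[OF x y] by auto
  qed
  finally show ?thesis .
qed

lemma Zm_idx: assumes x: "x < 2*n" and y: "y < 2*n"
  shows "Zm $$ (x,y) = (if x div n = y div n then 0 else R $$ (x,y))"
  unfolding Zm_def using x y Dd_idx[OF x y] carrier_matD[OF Ddc] by simp

lemma block_eq: "Pm * T0 * mat_adjoint Pm = four_block_mat Dd (0\<^sub>m (2*n) (2*n)) (0\<^sub>m (2*n) (2*n)) Zm"
proof (rule eq_matI)
  fix q s assume "q < dim_row (four_block_mat Dd (0\<^sub>m (2*n) (2*n)) (0\<^sub>m (2*n) (2*n)) Zm)"
    "s < dim_col (four_block_mat Dd (0\<^sub>m (2*n) (2*n)) (0\<^sub>m (2*n) (2*n)) Zm)"
  then have q: "q < 2*n*2" and s: "s < 2*n*2" using carrier_matD[OF Ddc] carrier_matD[OF Zmc] by simp_all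
  have "(Pm * T0 * mat_adjoint Pm) $$ (q,s) = T0 $$ (sg q, sg s)"
    unfolding Pm_def by (rule perm_conj[OF sg_lt T0c q s])
  also have "\<dots> = (Fk (sg s mod 2) * R * Fk (sg q mod 2)) $$ (sg q div 2, sg s div 2)"
    using sg_lt[OF q] sg_lt[OF s] by (simp add: T0_def)
  also have "\<dots> = (if (sg q div 2) div n = sg s mod 2 \<and> (sg s div 2) div n = sg q mod 2 then R $$ (sg q div 2, sg s div 2) else 0)"
    by (rule FRF[OF div2_lt[OF sg_lt[OF q]] div2_lt[OF sg_lt[OF s]]])
  also have "\<dots> = four_block_mat Dd (0\<^sub>m (2*n) (2*n)) (0\<^sub>m (2*n) (2*n)) Zm $$ (q,s)"
  proof -
    have dD: "dim_row Dd = 2*n" "dim_col Dd = 2*n" "dim_row Zm = 2*n" "dim_col Zm = 2*n"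
      using carrier_matD[OF Ddc] carrier_matD[OF Zmc] by auto
    have qs: "q < dim_row Dd + dim_row Zm" "s < dim_col Dd + dim_col Zm" using q s dD by auto
    show ?thesis
    proof (cases "q < 2*n")
      case qT: True
      have dq: "q div n = 0 \<or> q div n = 1" using div_lt2[OF qT] by arith
      show ?thesis
      proof (cases "s < 2*n")
        case sT: True
        have ds: "s div n = 0 \<or> s div n = 1" using div_lt2[OF sT] by arith
        have "four_block_mat Dd (0\<^sub>m (2*n) (2*n)) (0\<^sub>m (2*n) (2*n)) Zm $$ (q,s) = Dd $$ (q,s)"
          using qT sT dD by (simp add: index_mat_four_block(1)[OF qs])
        then show ?thesis unfolding sg_lo[OF qT] sg_lo[OF sT] Dd_idx[OF qT sT] using dq ds by auto
      next
        case sF: False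
        have x: "s - 2*n < 2*n" using sF s by simp
        have ds: "(s - 2*n) div n = 0 \<or> (s - 2*n) div n = 1" using div_lt2[OF x] by arith
        have "four_block_mat Dd (0\<^sub>m (2*n) (2*n)) (0\<^sub>m (2*n) (2*n)) Zm $$ (q,s) = 0"
          using qT sF dD x by (simp add: index_mat_four_block(1)[OF qs])
        then show ?thesis unfolding sg_lo[OF qT] sg_hi[OF sF s] ifh2[OF dq ds] by simp
      qed
    next
      case qF: False
      have xq: "q - 2*n < 2*n" using qF q by simp
      have dq: "(q - 2*n) div n = 0 \<or> (q - 2*n) div n = 1" using div_lt2[OF xq] by arith
      show ?thesis
      proof (cases "s < 2*n")
        case sT: True
        have ds: "s div n = 0 \<or> s div n = 1" using div_lt2[OF sT] by arith
        have "four_block_mat Dd (0\<^sub>m (2*n) (2*n)) (0\<^sub>m (2*n) (2*n)) Zm $$ (q,s) = 0"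
          using qF sT dD xq by (simp add: index_mat_four_block(1)[OF qs])
        then show ?thesis unfolding sg_hi[OF qF q] sg_lo[OF sT] ifh3[OF dq ds] by simp
      next
        case sF: False
        have x: "s - 2*n < 2*n" using sF s by simp
        have ds: "(s - 2*n) div n = 0 \<or> (s - 2*n) div n = 1" using div_lt2[OF x] by arith
        have "four_block_mat Dd (0\<^sub>m (2*n) (2*n)) (0\<^sub>m (2*n) (2*n)) Zm $$ (q,s) = Zm $$ (q - 2*n, s - 2*n)"
          using qF sF dD by (simp add: index_mat_four_block(1)[OF qs])
        then show ?thesis unfolding sg_hi[OF qF q] sg_hi[OF sF s] Zm_idx[OF xq x] ifh1[OF dq ds] by simp
      qed
    qed
  qed
  finally show "(Pm * T0 * mat_adjoint Pm) $$ (q,s) = four_block_mat Dd (0\<^sub>m (2*n) (2*n)) (0\<^sub>m (2*n) (2*n)) Zm $$ (q,s)" .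
qed (use carrier_matD[OF Ddc] carrier_matD[OF Zmc] in \<open>simp_all add: Pm_def perm_mat_def\<close>)

end

context qsetup begin

lemma R_psd: "psd R" unfolding R_def by (rule psd_congr[OF rhoc rho_psd Utc])

lemma Dd_psd: "psd Dd"
proof -
  have p: "psd (Fk k * R * Fk k)" for k
    using psd_congr[OF Rc R_psd Fkc[of k]] Fk_herm[of k] by simp
  show ?thesis unfolding Dd_def
    by (rule psd_add[OF mult_sq[OF mult_sq[OF Fkc Rc] Fkc] mult_sq[OF mult_sq[OF Fkc Rc] Fkc] p p])
qed

lemma R_tr: "mtrace R = 1"
proof -
  have "mtrace R = mtrace ((mat_adjoint Ut * \<rho>) * Ut)" unfolding R_def ..
  also have "\<dots> = mtrace (Ut * (mat_adjoint Ut * \<rho>))"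
    by (rule mtrace_comm[OF mult_sq[OF Utac rhoc] Utc])
  also have "Ut * (mat_adjoint Ut * \<rho>) = \<rho>" by (rule cancel_l[OF Utc Utac rhoc UtUt(2)])
  finally show ?thesis using rho_tr by simp
qed

lemma Dd_tr: "mtrace Dd = 1"
proof -
  have "mtrace Dd = (\<Sum>i<2*n. Dd $$ (i,i))" unfolding mtrace_def using carrier_matD[OF Ddc] by simp
  also have "\<dots> = (\<Sum>i<2*n. R $$ (i,i))" by (intro sum.cong refl) (simp add: Dd_idx)
  also have "\<dots> = mtrace R" unfolding mtrace_def by simp
  finally show ?thesis using R_tr by simp
qed

lemma tn_Dd: "trace_norm Dd = 1"
  using tn_psd[OF Ddc Dd_psd] Dd_tr by simp

lemma tn_PT: "trace_norm (partial_transpose2 (2*n) 2 (meas_iso U n * \<rho> * mat_adjoint (meas_iso U n))) = 1 + trace_norm Zm"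
proof -
  have "trace_norm (partial_transpose2 (2*n) 2 (meas_iso U n * \<rho> * mat_adjoint (meas_iso U n))) = trace_norm T0"
    unfolding PT_eq by (rule tn_unitary[OF W_u T0c])
  also have "\<dots> = trace_norm (Pm * T0 * mat_adjoint Pm)" by (rule tn_unitary[OF Pm_u T0c, symmetric])
  also have "\<dots> = trace_norm Dd + trace_norm Zm" unfolding block_eq by (rule tn_block[OF Ddc Zmc])
  finally show ?thesis using tn_Dd by simp
qed

lemma conj_add: assumes A: "A \<in> carrier_mat (2*n) (2*n)" and B: "B \<in> carrier_mat (2*n) (2*n)"
  shows "Ut * A * mat_adjoint Ut + Ut * B * mat_adjoint Ut = Ut * (A + B) * mat_adjoint Ut"
proof -
  have "Ut * (A + B) = Ut * A + Ut * B" by (rule mult_add_distrib_mat[OF Utc A B])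
  then have "Ut * (A + B) * mat_adjoint Ut = (Ut * A + Ut * B) * mat_adjoint Ut" by simp
  also have "\<dots> = Ut * A * mat_adjoint Ut + Ut * B * mat_adjoint Ut"
    by (rule add_mult_distrib_mat[OF mult_sq[OF Utc A] mult_sq[OF Utc B] Utac])
  finally show ?thesis by simp
qed

lemma conj_minus: assumes A: "A \<in> carrier_mat (2*n) (2*n)" and B: "B \<in> carrier_mat (2*n) (2*n)"
  shows "Ut * A * mat_adjoint Ut - Ut * B * mat_adjoint Ut = Ut * (A - B) * mat_adjoint Ut"
proof -
  have "Ut * (A - B) = Ut * A - Ut * B" by (rule mult_minus_distrib_mat[OF Utc A B])
  then have "Ut * (A - B) * mat_adjoint Ut = (Ut * A - Ut * B) * mat_adjoint Ut" by simp
  also have "\<dots> = Ut * A * mat_adjoint Ut - Ut * B * mat_adjoint Ut"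
    by (rule minus_mult_distrib_mat[OF mult_sq[OF Utc A] mult_sq[OF Utc B] Utac])
  finally show ?thesis by simp
qed

lemma deph: "\<rho> - dephase U n \<rho> = Ut * Zm * mat_adjoint Ut"
proof -
  have FRFc: "Fk k * R * Fk k \<in> carrier_mat (2*n) (2*n)" for k by (rule mult_sq[OF mult_sq[OF Fkc Rc] Fkc])
  have "dephase U n \<rho> = PP 0 * \<rho> * PP 0 + PP 1 * \<rho> * PP 1"
    unfolding dephase_def PP_def ..
  also have "\<dots> = Ut * (Fk 0 * R * Fk 0) * mat_adjoint Ut + Ut * (Fk 1 * R * Fk 1) * mat_adjoint Ut"
    by (simp add: PRP)
  also have "\<dots> = Ut * Dd * mat_adjoint Ut" unfolding Dd_def by (rule conj_add[OF FRFc FRFc])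
  finally have "\<rho> - dephase U n \<rho> = Ut * R * mat_adjoint Ut - Ut * Dd * mat_adjoint Ut"
    using rho_eq by simp
  also have "\<dots> = Ut * Zm * mat_adjoint Ut" unfolding Zm_def by (rule conj_minus[OF Rc Ddc])
  finally show ?thesis .
qed

lemma main: "negativity (2*n) 2 (meas_iso U n * \<rho> * mat_adjoint (meas_iso U n)) = trace_norm (\<rho> - dephase U n \<rho>) / 2"
proof -
  have "trace_norm (\<rho> - dephase U n \<rho>) = trace_norm Zm"
    unfolding deph by (rule tn_unitary[OF Ut_u Zmc])
  then show ?thesis unfolding negativity_def tn_PT by simp
qed

end

theorem theorem7:
  fixes n :: nat and \<rho> :: "complex mat"
  assumes "density (2 * n) \<rho>"
  shows "Q_neg n \<rho> = Inf {trace_norm (\<rho> - dephase U n \<rho>) / 2 | U. unitary2 U}"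
proof -
  have npos: "n > 0"
  proof (rule ccontr)
    assume "\<not> n > 0"
    then have "n = 0" by simp
    then have c: "\<rho> \<in> carrier_mat 0 0" using assms by (simp add: density_def)
    have "dim_row \<rho> = 0" using carrier_matD(1)[OF c] .
    then have "mtrace \<rho> = 0" by (simp add: mtrace_def)
    then show False using assms by (simp add: density_def)
  qed
  have eq: "negativity (2 * n) 2 (meas_iso U n * \<rho> * mat_adjoint (meas_iso U n)) = trace_norm (\<rho> - dephase U n \<rho>) / 2"
    if U: "unitary2 U" for U
    using qsetup.main[OF qsetup.intro[OF U npos assms]] .
  have "{negativity (2 * n) 2 (meas_iso U n * \<rho> * mat_adjoint (meas_iso U n)) | U. unitary2 U}
      = {trace_norm (\<rho> - dephase U n \<rho>) / 2 | U. unitary2 U}"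
    using eq by metis
  then show ?thesis unfolding Q_neg_def by simp
qed

end
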